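(* Let $w$ be a locally integrable function on $[0,\infty)$ with $w(t)>0$ a.e. and $\int_0^\infty w(t)\,dt=\infty$, and let $1\le p<\infty$. Then the space $\widetilde{L_p(w)}$ is isomorphic to $(\bigoplus_{n\in\mathbb Z}L_\infty[0,1])_{l_p}$, with the constant of the isomorphism depending only on $w$.
   Context: $L_p(w)$ is the space of measurable $f$ on $[0,\infty)$ with $\|f\|_{L_p(w)}=(\int_0^\infty|f(t)|^pw(t)\,dt)^{1/p}<\infty$. For measurable $f$, $\widetilde f(x)=\operatorname{ess\,sup}_{t\ge x}|f(t)|$, and $\widetilde{L_p(w)}=\{f:\widetilde f\in L_p(w)\}$ with $\|f\|=\|\widetilde f\|_{L_p(w)}$. $(\bigoplus_{n\in\mathbb Z}X_n)_{l_p}$ is the space of families $(x_n)_{n\in\mathbb Z}$, $x_n\in X_n$, with norm $(\sum_n\|x_n\|^p)^{1/p}<\infty$. *)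

theory Defs
  imports "HOL-Analysis.Analysis"
begin

definition epow :: "ennreal \<Rightarrow> real \<Rightarrow> ennreal" where
  "epow c p = (if c = \<infinity> then \<infinity> else ennreal ((enn2real c) powr p))"

definition tilde :: "(real \<Rightarrow> real) \<Rightarrow> real \<Rightarrow> ennreal" where
  "tilde f x = Inf {c. AE t in lebesgue. t \<ge> x \<longrightarrow> ennreal \<bar>f t\<bar> \<le> c}"

definition tilde_int :: "real \<Rightarrow> (real \<Rightarrow> real) \<Rightarrow> (real \<Rightarrow> real) \<Rightarrow> ennreal" where
  "tilde_int p w f = (\<integral>\<^sup>+ t. epow (tilde f t) p * ennreal (w t) * indicator {0..} t \<partial>lebesgue)"

definition tildeLp :: "real \<Rightarrow> (real \<Rightarrow> real) \<Rightarrow> (real \<Rightarrow> real) set" where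
  "tildeLp p w = {f. f \<in> borel_measurable (restrict_space lebesgue {0..}) \<and> tilde_int p w f < \<infinity>}"

definition tildeLp_norm :: "real \<Rightarrow> (real \<Rightarrow> real) \<Rightarrow> (real \<Rightarrow> real) \<Rightarrow> real" where
  "tildeLp_norm p w f = (enn2real (tilde_int p w f)) powr (1 / p)"

definition Linf01_norm :: "(real \<Rightarrow> real) \<Rightarrow> ennreal" where
  "Linf01_norm g = Inf {c. AE t in lebesgue. t \<in> {0..1} \<longrightarrow> ennreal \<bar>g t\<bar> \<le> c}"

definition lp_sum :: "real \<Rightarrow> (int \<Rightarrow> real \<Rightarrow> real) \<Rightarrow> ennreal" where
  "lp_sum p x = (\<integral>\<^sup>+ n. epow (Linf01_norm (x n)) p \<partial>count_space UNIV)"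

definition lpLinf :: "real \<Rightarrow> (int \<Rightarrow> real \<Rightarrow> real) set" where
  "lpLinf p = {x. (\<forall>n. x n \<in> borel_measurable (restrict_space lebesgue {0..1})) \<and> lp_sum p x < \<infinity>}"

definition lpLinf_norm :: "real \<Rightarrow> (int \<Rightarrow> real \<Rightarrow> real) \<Rightarrow> real" where
  "lpLinf_norm p x = (enn2real (lp_sum p x)) powr (1 / p)"

end

theory Submission imports Defs begin

definition es :: "(real \<Rightarrow> bool) \<Rightarrow> (real \<Rightarrow> real) \<Rightarrow> ennreal" where
  "es Q g = Inf {c. AE t in lebesgue. Q t \<longrightarrow> ennreal \<bar>g t\<bar> \<le> c}"

lemma tilde_es: "tilde f x = es (\<lambda>t. x \<le> t) f"
  by (simp add: tilde_def es_def)

lemma Linf_es: "Linf01_norm g = es (\<lambda>t. t \<in> {0..1}) g"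
  by (simp add: Linf01_norm_def es_def)

lemma es_AE: "AE t in lebesgue. Q t \<longrightarrow> ennreal \<bar>g t\<bar> \<le> es Q g"
proof (cases "{c. AE t in lebesgue. Q t \<longrightarrow> ennreal \<bar>g t\<bar> \<le> c} = {}")
  case True
  then show ?thesis by (simp add: es_def)
next
  case False
  then obtain h :: "nat \<Rightarrow> ennreal" where h: "range h \<subseteq> {c. AE t in lebesgue. Q t \<longrightarrow> ennreal \<bar>g t\<bar> \<le> c}"
    and hI: "es Q g = (INF i. h i)"
    using ennreal_Inf_countable_INF[OF False] unfolding es_def by blast
  have "AE t in lebesgue. \<forall>i. Q t \<longrightarrow> ennreal \<bar>g t\<bar> \<le> h i"
    using h by (subst AE_all_countable) auto
  then show ?thesis
    by eventually_elim (auto simp: hI intro: INF_greatest)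
qed

lemma es_least: "AE t in lebesgue. Q t \<longrightarrow> ennreal \<bar>g t\<bar> \<le> c \<Longrightarrow> es Q g \<le> c"
  unfolding es_def by (rule Inf_lower) simp

lemma es_le:
  assumes "AE t in lebesgue. Q t \<longrightarrow> Q' t \<and> \<bar>g t\<bar> \<le> \<bar>h t\<bar>"
  shows "es Q g \<le> es Q' h"
proof (rule es_least)
  show "AE t in lebesgue. Q t \<longrightarrow> ennreal \<bar>g t\<bar> \<le> es Q' h"
    using assms es_AE[of Q' h]
    by eventually_elim (meson ennreal_leI order_trans)
qed

lemma es_cong:
  assumes "AE t in lebesgue. (Q t \<longleftrightarrow> Q' t) \<and> (Q t \<longrightarrow> \<bar>g t\<bar> = \<bar>h t\<bar>)"
  shows "es Q g = es Q' h"
proof (rule antisym)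
  show "es Q g \<le> es Q' h" by (rule es_le) (use assms in \<open>eventually_elim, auto\<close>)
  show "es Q' h \<le> es Q g" by (rule es_le) (use assms in \<open>eventually_elim, auto\<close>)
qed

lemma es_scale_le:
  assumes c: "c \<ge> 0"
  shows "es Q (\<lambda>t. c * g t) \<le> ennreal c * es Q g"
proof (rule es_least)
  show "AE t in lebesgue. Q t \<longrightarrow> ennreal \<bar>c * g t\<bar> \<le> ennreal c * es Q g"
    using es_AE[of Q g]
  proof eventually_elim
    case (elim t)
    show ?case
    proof
      assume "Q t"
      then have "ennreal \<bar>g t\<bar> \<le> es Q g" using elim by simp
      then have "ennreal c * ennreal \<bar>g t\<bar> \<le> ennreal c * es Q g"
        by (rule mult_left_mono) simp
      then show "ennreal \<bar>c * g t\<bar> \<le> ennreal c * es Q g"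
        using c by (simp add: abs_mult ennreal_mult)
    qed
  qed
qed

lemma es_scale:
  assumes c: "c > 0"
  shows "es Q (\<lambda>t. c * g t) = ennreal c * es Q g"
proof (rule antisym)
  show "es Q (\<lambda>t. c * g t) \<le> ennreal c * es Q g" using c by (intro es_scale_le) simp
  have "es Q g = es Q (\<lambda>t. (1/c) * (c * g t))"
    using c by (intro es_cong) auto
  also have "\<dots> \<le> ennreal (1/c) * es Q (\<lambda>t. c * g t)"
    using c by (intro es_scale_le) simp
  finally have "ennreal c * es Q g \<le> ennreal c * (ennreal (1/c) * es Q (\<lambda>t. c * g t))"
    by (rule mult_left_mono) simp
  also have "\<dots> = es Q (\<lambda>t. c * g t)"
    using c by (simp add: mult.assoc[symmetric] ennreal_mult[symmetric])
  finally show "ennreal c * es Q g \<le> es Q (\<lambda>t. c * g t)" .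
qed

lemma affine_meas: fixes a c :: real assumes "c \<noteq> 0" shows "(\<lambda>s. a + c * s) \<in> lebesgue \<rightarrow>\<^sub>M lebesgue"
  using lebesgue_affine_measurable[where c="\<lambda>_::real. c" and t=a] assms by simp

lemma AE_ne: "AE t in lebesgue. t \<noteq> (a::real)"
  by (rule AE_I'[of "{a}"]) auto

lemma AE_affine: fixes a L :: real assumes L: "L \<noteq> 0" and P: "Measurable.pred lebesgue P"
  shows "(AE t in lebesgue. P t) \<longleftrightarrow> (AE s in lebesgue. P (a + L * s))"
proof -
  have "(AE t in lebesgue. P t) \<longleftrightarrow> (AE t in density (distr lebesgue lebesgue (\<lambda>x. a + L * x)) (\<lambda>_. ennreal (abs L)). P t)"
    by (rule arg_cong[where f="\<lambda>M. almost_everywhere M P"], rule lebesgue_real_affine[OF L])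
  also have "\<dots> \<longleftrightarrow> (AE t in distr lebesgue lebesgue (\<lambda>x. a + L * x). P t)"
    using L by (subst AE_density) auto
  also have "\<dots> \<longleftrightarrow> (AE s in lebesgue. P (a + L * s))"
    using P affine_meas[OF L, of a] by (subst AE_distr_iff) (auto simp: pred_def)
  finally show ?thesis .
qed

lemma es_affine:
  fixes a L :: real
  assumes L: "L > 0" and g[measurable]: "g \<in> borel_measurable lebesgue"
  shows "es (\<lambda>s. s \<in> {0..1}) (\<lambda>s. g (a + L * s)) = es (\<lambda>t. t \<in> {a..a+L}) g"
  unfolding es_def
proof (rule arg_cong[where f=Inf], rule Collect_cong)
  fix c
  have P: "Measurable.pred lebesgue (\<lambda>t. t \<in> {a..a+L} \<longrightarrow> ennreal \<bar>g t\<bar> \<le> c)"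
  proof -
    have m: "(\<lambda>t. ennreal \<bar>g t\<bar>) \<in> borel_measurable lebesgue" by measurable
    have "{t. ennreal \<bar>g t\<bar> \<le> c} \<in> sets lebesgue"
      using measurable_sets[OF m, of "{..c}"] by (simp add: vimage_def)
    moreover have eq: "{t. t \<in> {a..a+L} \<longrightarrow> ennreal \<bar>g t\<bar> \<le> c} = - {a..a+L} \<union> {t. ennreal \<bar>g t\<bar> \<le> c}"
      by auto
    moreover have "- {a..a+L} \<in> sets lebesgue"
      using sets.compl_sets[of "{a..a+L}" lebesgue] by (simp add: Compl_eq_Diff_UNIV)
    ultimately have "- {a..a+L} \<union> {t. ennreal \<bar>g t\<bar> \<le> c} \<in> sets lebesgue"
      by (intro sets.Un) auto
    then show ?thesis unfolding pred_def eq[symmetric] by simp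
  qed
  have iff: "a + L * s \<in> {a..a+L} \<longleftrightarrow> s \<in> {0..1}" for s
    using L by (auto simp: mult_le_cancel_left1 mult_le_cancel_left2 zero_le_mult_iff)
  have "(AE t in lebesgue. t \<in> {a..a+L} \<longrightarrow> ennreal \<bar>g t\<bar> \<le> c) \<longleftrightarrow>
        (AE s in lebesgue. a + L * s \<in> {a..a+L} \<longrightarrow> ennreal \<bar>g (a + L * s)\<bar> \<le> c)"
    by (rule AE_affine[OF _ P]) (use L in simp)
  then show "(AE s in lebesgue. s \<in> {0..1} \<longrightarrow> ennreal \<bar>g (a + L * s)\<bar> \<le> c) \<longleftrightarrow>
        (AE t in lebesgue. t \<in> {a..a+L} \<longrightarrow> ennreal \<bar>g t\<bar> \<le> c)"
    by (simp only: iff)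
qed

lemma epow_mono: assumes p: "p \<ge> 0" and ab: "a \<le> b" shows "epow a p \<le> epow b p"
proof (cases "b = \<infinity>")
  case True then show ?thesis by (simp add: epow_def)
next
  case False
  then have "a \<noteq> \<infinity>" using ab by (auto simp: top_unique)
  moreover have "enn2real a \<le> enn2real b" using ab False by (simp add: enn2real_mono top.not_eq_extremum)
  ultimately show ?thesis using False p
    by (auto simp: epow_def intro!: ennreal_leI powr_mono2)
qed

lemma epow_zero: "p > 0 \<Longrightarrow> epow 0 p = 0"
  by (simp add: epow_def)

lemma epow_scale: assumes c: "c > 0" shows "epow (ennreal c * A) p = ennreal (c powr p) * epow A p"
proof (cases "A = \<infinity>")
  case True then show ?thesis using c by (simp add: epow_def ennreal_mult_top)
next
  case False
  then obtain r where r: "r \<ge> 0" "A = ennreal r" by (cases A) auto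
  have e1: "ennreal c * A = ennreal (c * r)" using r c by (simp add: ennreal_mult)
  have "epow (ennreal (c * r)) p = ennreal ((c * r) powr p)"
    using r c by (simp add: epow_def)
  also have "\<dots> = ennreal (c powr p) * ennreal (r powr p)"
    using r c by (simp add: powr_mult ennreal_mult)
  also have "ennreal (r powr p) = epow A p" using r by (simp add: epow_def)
  finally show ?thesis by (simp add: e1)
qed

lemma epow_SUP_le:
  fixes a :: "'i \<Rightarrow> ennreal"
  assumes p: "p > 0" and le: "\<And>k. k \<in> K \<Longrightarrow> epow (a k) p \<le> S"
  shows "epow (SUP k\<in>K. a k) p \<le> S"
proof (cases "S = \<infinity>")
  case True then show ?thesis by simp
next
  case False
  then obtain s where s: "s \<ge> 0" "S = ennreal s" by (cases S) auto
  have "a k \<le> ennreal (s powr (1/p))" if k: "k \<in> K" for k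
  proof -
    have "a k \<noteq> \<infinity>" using le[OF k] s by (auto simp: epow_def top_unique)
    then obtain r where r: "r \<ge> 0" "a k = ennreal r" by (cases "a k") auto
    have "ennreal (r powr p) \<le> ennreal s" using le[OF k] r s by (simp add: epow_def)
    then have "r powr p \<le> s" using s by (simp add: ennreal_le_iff)
    then have "(r powr p) powr (1/p) \<le> s powr (1/p)" using p r by (intro powr_mono2) auto
    then have "r \<le> s powr (1/p)" using p r by (simp add: powr_powr)
    then show ?thesis using r by (simp add: ennreal_leI)
  qed
  then have "(SUP k\<in>K. a k) \<le> ennreal (s powr (1/p))" by (rule SUP_least)
  then have "epow (SUP k\<in>K. a k) p \<le> epow (ennreal (s powr (1/p))) p"
    using p by (intro epow_mono) auto
  also have "\<dots> = S" using s p by (simp add: epow_def powr_powr)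
  finally show ?thesis .
qed

lemma id_leb[measurable]: "(\<lambda>x::real. x) \<in> borel_measurable lebesgue"
  by (simp add: measurable_completion)

lemma nn_single:
  fixes h :: "int \<Rightarrow> ennreal"
  shows "(\<integral>\<^sup>+n. h n * indicator {k} n \<partial>count_space UNIV) = h k"
  by simp

locale dec =
  fixes w :: "real \<Rightarrow> real" and x :: "int \<Rightarrow> real"
  assumes x_pos: "\<And>n. 0 < x n"
    and x_step: "\<And>n. x n < x (n+1)"
    and x_cover: "\<And>t. 0 < t \<Longrightarrow> \<exists>n. x n \<le> t \<and> t < x (n+1)"
    and w_int: "\<And>n. (\<integral>\<^sup>+t. ennreal (w t) * indicator {x n..<x (n+1)} t \<partial>lebesgue) = ennreal (2 powr real_of_int n)"
    and w_meas: "(\<lambda>t. ennreal (w t)) \<in> borel_measurable lebesgue"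
begin

lemma x_mono: "n \<le> m \<Longrightarrow> x n \<le> x m"
proof (induction m rule: int_ge_induct)
  case base then show ?case by simp
next
  case (step i) then show ?case using x_step[of i] by linarith
qed

lemma idx_unique:
  assumes "x n \<le> t" "t < x (n+1)" "x m \<le> t" "t < x (m+1)" shows "n = m"
proof (rule ccontr)
  assume "n \<noteq> m"
  then have "n + 1 \<le> m \<or> m + 1 \<le> n" by linarith
  then show False
  proof
    assume "n + 1 \<le> m" then have "x (n+1) \<le> x m" by (rule x_mono)
    then show False using assms by linarith
  next
    assume "m + 1 \<le> n" then have "x (m+1) \<le> x n" by (rule x_mono)
    then show False using assms by linarith
  qed
qed

lemma sum_single:
  fixes h :: "int \<Rightarrow> ennreal"
  assumes t: "t \<in> {x k..<x (k+1)}"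
  shows "(\<integral>\<^sup>+n. h n * indicator {x n..<x (n+1)} t \<partial>count_space UNIV) = h k"
proof -
  have "indicator {x n..<x (n+1)} t = (indicator {k} n :: ennreal)" for n
  proof (cases "n = k")
    case True then show ?thesis using t by simp
  next
    case False
    have "t \<notin> {x n..<x (n+1)}"
    proof
      assume "t \<in> {x n..<x (n+1)}"
      then have "n = k" using idx_unique[of n t k] t by simp
      with False show False by simp
    qed
    then show ?thesis using False by simp
  qed
  then show ?thesis by simp
qed

lemma sum_none:
  fixes h :: "int \<Rightarrow> ennreal"
  assumes t: "\<And>k. t \<notin> {x k..<x (k+1)}"
  shows "(\<integral>\<^sup>+n. h n * indicator {x n..<x (n+1)} t \<partial>count_space UNIV) = 0"
proof -
  have "(\<lambda>n. h n * indicator {x n..<x (n+1)} t) = (\<lambda>n. 0)" using t by (auto simp: fun_eq_iff)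
  then show ?thesis by simp
qed

definition A :: "(real \<Rightarrow> real) \<Rightarrow> int \<Rightarrow> ennreal" where
  "A g n = es (\<lambda>s. s \<in> {x n..x (n+1)}) g"

definition S :: "real \<Rightarrow> (real \<Rightarrow> real) \<Rightarrow> ennreal" where
  "S p g = (\<integral>\<^sup>+n. ennreal (2 powr real_of_int n) * epow (A g n) p \<partial>count_space UNIV)"

lemma wm: "(\<lambda>t. ennreal (w t) * indicator {x n..<x (n+1)} t) \<in> borel_measurable lebesgue"
proof -
  have "indicator {x n..<x (n+1)} \<in> borel_measurable lebesgue"
    by (rule borel_measurable_indicator) simp
  from borel_measurable_times_ennreal[OF w_meas this] show ?thesis .
qed

lemma wm2: "(\<lambda>t. c * ennreal (w t) * indicator {x n..<x (n+1)} t) \<in> borel_measurable lebesgue"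
proof -
  from borel_measurable_times_ennreal[OF borel_measurable_const[of c] wm[of n]]
  show ?thesis by (simp add: mult.assoc)
qed

lemma swap_w:
  fixes c :: "int \<Rightarrow> ennreal"
  shows "(\<integral>\<^sup>+t. (\<integral>\<^sup>+n. c n * ennreal (w t) * indicator {x n..<x (n+1)} t \<partial>count_space UNIV) \<partial>lebesgue)
    = (\<integral>\<^sup>+n. ennreal (2 powr real_of_int n) * c n \<partial>count_space UNIV)"
proof -
  have "(\<integral>\<^sup>+t. (\<integral>\<^sup>+n. c n * ennreal (w t) * indicator {x n..<x (n+1)} t \<partial>count_space UNIV) \<partial>lebesgue)
    = (\<integral>\<^sup>+n. (\<integral>\<^sup>+t. c n * ennreal (w t) * indicator {x n..<x (n+1)} t \<partial>lebesgue) \<partial>count_space UNIV)"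
  proof (rule nn_integral_count_space_nn_integral)
    show "countable (UNIV :: int set)" by simp
    fix n :: int
    show "(\<lambda>t. c n * ennreal (w t) * indicator {x n..<x (n+1)} t) \<in> borel_measurable lebesgue"
      by (rule wm2)
  qed
  also have "\<dots> = (\<integral>\<^sup>+n. ennreal (2 powr real_of_int n) * c n \<partial>count_space UNIV)"
  proof (rule nn_integral_cong)
    fix n
    have "(\<integral>\<^sup>+t. c n * ennreal (w t) * indicator {x n..<x (n+1)} t \<partial>lebesgue)
       = c n * (\<integral>\<^sup>+t. ennreal (w t) * indicator {x n..<x (n+1)} t \<partial>lebesgue)"
      using nn_integral_cmult[OF wm[of n], of "c n"] by (simp add: mult.assoc)
    then show "(\<integral>\<^sup>+t. c n * ennreal (w t) * indicator {x n..<x (n+1)} t \<partial>lebesgue)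
       = ennreal (2 powr real_of_int n) * c n"
      by (simp add: w_int mult.commute)
  qed
  finally show ?thesis .
qed

lemma LB:
  assumes p: "p \<ge> 0"
  shows "(\<integral>\<^sup>+n. ennreal (2 powr real_of_int n) * epow (A g (n+1)) p \<partial>count_space UNIV) \<le> tilde_int p w g"
proof -
  have "(\<integral>\<^sup>+n. ennreal (2 powr real_of_int n) * epow (A g (n+1)) p \<partial>count_space UNIV)
     = (\<integral>\<^sup>+t. (\<integral>\<^sup>+n. epow (A g (n+1)) p * ennreal (w t) * indicator {x n..<x (n+1)} t \<partial>count_space UNIV) \<partial>lebesgue)"
    by (rule swap_w[symmetric])
  also have "\<dots> \<le> tilde_int p w g"
    unfolding tilde_int_def
  proof (rule nn_integral_mono)
    fix t
    show "(\<integral>\<^sup>+n. epow (A g (n+1)) p * ennreal (w t) * indicator {x n..<x (n+1)} t \<partial>count_space UNIV)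
       \<le> epow (tilde g t) p * ennreal (w t) * indicator {0..} t"
    proof (cases "\<exists>k. t \<in> {x k..<x (k+1)}")
      case True
      then obtain k where k: "t \<in> {x k..<x (k+1)}" by blast
      have t0: "t \<ge> 0" using k x_pos[of k] by auto
      have "A g (k+1) \<le> tilde g t"
        unfolding A_def tilde_es
      proof (rule es_le, rule AE_I2, intro impI conjI)
        fix s assume "s \<in> {x (k+1)..x (k+1+1)}"
        then show "t \<le> s" using k by auto
      qed simp
      then have "epow (A g (k+1)) p \<le> epow (tilde g t) p" using p by (rule epow_mono[rotated])
      then have "epow (A g (k+1)) p * ennreal (w t) \<le> epow (tilde g t) p * ennreal (w t)"
        by (rule mult_right_mono) simp
      also have "\<dots> = epow (tilde g t) p * ennreal (w t) * indicator {0..} t" using t0 by simp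
      finally show ?thesis
        by (subst sum_single[where h="\<lambda>n. epow (A g (n+1)) p * ennreal (w t)", OF k])
    next
      case False
      then show ?thesis
        by (subst sum_none[where h="\<lambda>n. epow (A g (n+1)) p * ennreal (w t)"]) auto
    qed
  qed
  finally show ?thesis .
qed

lemma UB:
  assumes p: "p \<ge> 0"
  shows "tilde_int p w g \<le> (\<integral>\<^sup>+n. ennreal (2 powr real_of_int n) * epow (tilde g (x n)) p \<partial>count_space UNIV)"
proof -
  have "tilde_int p w g \<le> (\<integral>\<^sup>+t. (\<integral>\<^sup>+n. epow (tilde g (x n)) p * ennreal (w t) * indicator {x n..<x (n+1)} t \<partial>count_space UNIV) \<partial>lebesgue)"
    unfolding tilde_int_def
  proof (rule nn_integral_mono_AE)
    show "AE t in lebesgue. epow (tilde g t) p * ennreal (w t) * indicator {0..} t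
       \<le> (\<integral>\<^sup>+n. epow (tilde g (x n)) p * ennreal (w t) * indicator {x n..<x (n+1)} t \<partial>count_space UNIV)"
      using AE_ne[of 0]
    proof eventually_elim
      case (elim t)
      show ?case
      proof (cases "t > 0")
        case True
        then obtain k where k: "t \<in> {x k..<x (k+1)}" using x_cover by auto
        have "tilde g t \<le> tilde g (x k)"
          unfolding tilde_es
        proof (rule es_le, rule AE_I2, intro impI conjI)
          fix s assume "t \<le> s"
          then show "x k \<le> s" using k by auto
        qed simp
        then have "epow (tilde g t) p \<le> epow (tilde g (x k)) p" using p by (rule epow_mono[rotated])
        then have "epow (tilde g t) p * ennreal (w t) \<le> epow (tilde g (x k)) p * ennreal (w t)"
          by (rule mult_right_mono) simp
        moreover have "epow (tilde g t) p * ennreal (w t) * indicator {0..} t = epow (tilde g t) p * ennreal (w t)"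
          using True by simp
        ultimately show ?thesis
          by (subst sum_single[where h="\<lambda>n. epow (tilde g (x n)) p * ennreal (w t)", OF k]) simp
      next
        case False
        then show ?thesis using elim by simp
      qed
    qed
  qed
  also have "\<dots> = (\<integral>\<^sup>+n. ennreal (2 powr real_of_int n) * epow (tilde g (x n)) p \<partial>count_space UNIV)"
    by (rule swap_w)
  finally show ?thesis .
qed


lemma TB:
  assumes p: "p > 0"
  shows "epow (tilde g (x n)) p \<le> (\<integral>\<^sup>+k. epow (A g k) p * indicator {n..} k \<partial>count_space UNIV)"
proof -
  have "tilde g (x n) \<le> (SUP k\<in>{n..}. A g k)"
    unfolding tilde_es
  proof (rule es_least)
    have "AE t in lebesgue. \<forall>k. t \<in> {x k..x (k+1)} \<longrightarrow> ennreal \<bar>g t\<bar> \<le> A g k"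
      unfolding A_def by (subst AE_all_countable) (auto intro: es_AE)
    then show "AE t in lebesgue. x n \<le> t \<longrightarrow> ennreal \<bar>g t\<bar> \<le> (SUP k\<in>{n..}. A g k)"
    proof eventually_elim
      case (elim t)
      show ?case
      proof
        assume t: "x n \<le> t"
        then have "t > 0" using x_pos[of n] by linarith
        then obtain k where k: "x k \<le> t" "t < x (k+1)" using x_cover by blast
        have "n \<le> k"
        proof (rule ccontr)
          assume "\<not> n \<le> k" then have "k + 1 \<le> n" by simp
          then show False using x_mono[of "k+1" n] t k by simp
        qed
        have "ennreal \<bar>g t\<bar> \<le> A g k" using elim k by auto
        also have "\<dots> \<le> (SUP k\<in>{n..}. A g k)" using \<open>n \<le> k\<close> by (intro SUP_upper) simp
        finally show "ennreal \<bar>g t\<bar> \<le> (SUP k\<in>{n..}. A g k)" .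
      qed
    qed
  qed
  then have "epow (tilde g (x n)) p \<le> epow (SUP k\<in>{n..}. A g k) p"
    using p by (intro epow_mono) auto
  also have "\<dots> \<le> (\<integral>\<^sup>+k. epow (A g k) p * indicator {n..} k \<partial>count_space UNIV)"
  proof (rule epow_SUP_le[OF p])
    fix k assume k: "k \<in> {n..}"
    have "epow (A g k) p = (\<integral>\<^sup>+k'. epow (A g k') p * indicator {k} k' \<partial>count_space UNIV)"
      by simp
    also have "\<dots> \<le> (\<integral>\<^sup>+k. epow (A g k) p * indicator {n..} k \<partial>count_space UNIV)"
      using k by (intro nn_integral_mono) (auto simp: indicator_def)
    finally show "epow (A g k) p \<le> (\<integral>\<^sup>+k. epow (A g k) p * indicator {n..} k \<partial>count_space UNIV)" .
  qed
  finally show ?thesis .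
qed

lemma geom:
  "(\<integral>\<^sup>+n. ennreal (2 powr real_of_int n) * indicator {..k} n \<partial>count_space UNIV) = ennreal (2 * 2 powr real_of_int k)"
proof -
  have bij: "bij_betw (\<lambda>m::nat. k - int m) UNIV {..k}"
  proof (rule bij_betwI')
    show "\<And>a b. (k - int a = k - int b) = (a = b)" by auto
    show "\<And>a. k - int a \<in> {..k}" by auto
    show "\<And>y. y \<in> {..k} \<Longrightarrow> \<exists>a\<in>UNIV. y = k - int a"
      by (rule_tac x="nat (k - y)" in bexI) auto
  qed
  have eq: "2 powr (real_of_int k - real m) = 2 powr real_of_int k * (1/2) ^ m" for m
    by (simp add: powr_diff powr_realpow divide_simps)
  have "(\<integral>\<^sup>+n. ennreal (2 powr real_of_int n) * indicator {..k} n \<partial>count_space UNIV)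
      = (\<integral>\<^sup>+n. ennreal (2 powr real_of_int n) \<partial>count_space {..k})"
    by (simp add: nn_integral_count_space_indicator)
  also have "\<dots> = (\<integral>\<^sup>+m. ennreal (2 powr real_of_int (k - int m)) \<partial>count_space UNIV)"
    by (rule nn_integral_bij_count_space[OF bij, symmetric])
  also have "\<dots> = (\<Sum>m. ennreal (2 powr real_of_int k * (1/2) ^ m))"
    by (simp add: nn_integral_count_space_nat eq)
  also have "\<dots> = ennreal (\<Sum>m. 2 powr real_of_int k * (1/2) ^ m)"
  proof (rule suminf_ennreal2)
    show "summable (\<lambda>m::nat. 2 powr real_of_int k * (1/2::real)^m)"
      by (rule summable_mult) (rule summable_geometric, simp)
  qed simp
  also have "(\<Sum>m. 2 powr real_of_int k * (1/2::real) ^ m) = 2 powr real_of_int k * 2"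
  proof -
    have "summable (\<lambda>m::nat. (1/2::real)^m)" by (rule summable_geometric) simp
    then have "(\<Sum>m. 2 powr real_of_int k * (1/2::real) ^ m) = 2 powr real_of_int k * (\<Sum>m. (1/2::real) ^ m)"
      by (rule suminf_mult)
    also have "(\<Sum>m. (1/2::real) ^ m) = 2" by (subst suminf_geometric) simp_all
    finally show ?thesis .
  qed
  finally show ?thesis by (simp add: mult.commute)
qed

lemma UB2:
  assumes p: "p > 0"
  shows "tilde_int p w g \<le> 2 * S p g"
proof -
  have "tilde_int p w g \<le> (\<integral>\<^sup>+n. ennreal (2 powr real_of_int n) * epow (tilde g (x n)) p \<partial>count_space UNIV)"
    using p by (intro UB) simp
  also have "\<dots> \<le> (\<integral>\<^sup>+n. ennreal (2 powr real_of_int n) * (\<integral>\<^sup>+k. epow (A g k) p * indicator {n..} k \<partial>count_space UNIV) \<partial>count_space UNIV)"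
    by (intro nn_integral_mono mult_left_mono TB p) simp
  also have "\<dots> = (\<integral>\<^sup>+n. (\<integral>\<^sup>+k. ennreal (2 powr real_of_int n) * (epow (A g k) p * indicator {n..} k) \<partial>count_space UNIV) \<partial>count_space UNIV)"
    by (rule nn_integral_cong, rule nn_integral_cmult[symmetric]) simp
  also have "\<dots> = (\<integral>\<^sup>+k. (\<integral>\<^sup>+n. ennreal (2 powr real_of_int n) * (epow (A g k) p * indicator {n..} k) \<partial>count_space UNIV) \<partial>count_space UNIV)"
    by (rule nn_integral_count_space_nn_integral) simp_all
  also have "\<dots> = (\<integral>\<^sup>+k. epow (A g k) p * ennreal (2 * 2 powr real_of_int k) \<partial>count_space UNIV)"
  proof (rule nn_integral_cong)
    fix k :: int
    have "(\<integral>\<^sup>+n. ennreal (2 powr real_of_int n) * (epow (A g k) p * indicator {n..} k) \<partial>count_space UNIV)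
       = (\<integral>\<^sup>+n. epow (A g k) p * (ennreal (2 powr real_of_int n) * indicator {..k} n) \<partial>count_space UNIV)"
      by (intro nn_integral_cong) (auto simp: indicator_def mult.commute)
    also have "\<dots> = epow (A g k) p * ennreal (2 * 2 powr real_of_int k)"
      by (simp add: nn_integral_cmult geom)
    finally show "(\<integral>\<^sup>+n. ennreal (2 powr real_of_int n) * (epow (A g k) p * indicator {n..} k) \<partial>count_space UNIV)
       = epow (A g k) p * ennreal (2 * 2 powr real_of_int k)" .
  qed
  also have "\<dots> = (\<integral>\<^sup>+k. 2 * (ennreal (2 powr real_of_int k) * epow (A g k) p) \<partial>count_space UNIV)"
    by (intro nn_integral_cong) (simp add: ennreal_mult mult_ac)
  also have "\<dots> = 2 * S p g"
    unfolding S_def by (rule nn_integral_cmult) simp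
  finally show ?thesis .
qed

lemma S_le:
  assumes p: "p \<ge> 0"
  shows "S p g \<le> 2 * tilde_int p w g"
proof -
  have bij: "bij_betw (\<lambda>n::int. n + 1) UNIV UNIV"
    by (rule bij_betwI[where g="\<lambda>n. n - 1"]) auto
  have "S p g = (\<integral>\<^sup>+n. ennreal (2 powr real_of_int (n+1)) * epow (A g (n+1)) p \<partial>count_space UNIV)"
    unfolding S_def by (rule nn_integral_bij_count_space[OF bij, symmetric])
  also have "\<dots> = (\<integral>\<^sup>+n. 2 * (ennreal (2 powr real_of_int n) * epow (A g (n+1)) p) \<partial>count_space UNIV)"
    by (intro nn_integral_cong) (simp add: powr_add ennreal_mult mult_ac)
  also have "\<dots> = 2 * (\<integral>\<^sup>+n. ennreal (2 powr real_of_int n) * epow (A g (n+1)) p \<partial>count_space UNIV)"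
    by (rule nn_integral_cmult) simp
  also have "\<dots> \<le> 2 * tilde_int p w g"
    by (intro mult_left_mono LB p) simp
  finally show ?thesis .
qed


definition Top :: "real \<Rightarrow> (real \<Rightarrow> real) \<Rightarrow> int \<Rightarrow> real \<Rightarrow> real" where
  "Top p f n s = 2 powr (real_of_int n / p) * f (x n + (x (n+1) - x n) * s)"

lemma Lpos: "x (n+1) - x n > 0" using x_step[of n] by simp

lemma Top_meas:
  assumes f: "f \<in> borel_measurable (restrict_space lebesgue {0..})"
  shows "Top p f n \<in> borel_measurable (restrict_space lebesgue {0..1})"
proof -
  have L: "x (n+1) - x n \<noteq> 0" using Lpos[of n] by simp
  have "(\<lambda>s. x n + (x (n+1) - x n) * s) \<in> restrict_space lebesgue {0..1} \<rightarrow>\<^sub>M restrict_space lebesgue {0..}"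
  proof (rule measurable_restrict_space3[OF affine_meas[OF L]])
    show "(\<lambda>s. x n + (x (n+1) - x n) * s) \<in> {0..1} \<rightarrow> {0..}"
      using Lpos[of n] x_pos[of n] by (auto intro!: add_nonneg_nonneg)
  qed
  from measurable_compose[OF this f]
  have "(\<lambda>s. f (x n + (x (n+1) - x n) * s)) \<in> borel_measurable (restrict_space lebesgue {0..1})" .
  from borel_measurable_times[OF borel_measurable_const this]
  show ?thesis unfolding Top_def[abs_def] .
qed

lemma Linf_T:
  assumes f: "f \<in> borel_measurable (restrict_space lebesgue {0..})"
  shows "Linf01_norm (Top p f n) = ennreal (2 powr (real_of_int n / p)) * A f n"
proof -
  define L where "L = x (n+1) - x n"
  have L: "L > 0" using Lpos[of n] by (simp add: L_def)
  define f0 where "f0 = (\<lambda>t. indicator {0..} t *\<^sub>R f t)"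
  have f0m: "f0 \<in> borel_measurable lebesgue"
    using borel_measurable_restrict_space_iff[of "{0..}" lebesgue f] f by (simp add: f0_def)
  have "Linf01_norm (Top p f n) = es (\<lambda>s. s \<in> {0..1}) (\<lambda>s. 2 powr (real_of_int n / p) * f (x n + L * s))"
    by (simp add: Linf_es Top_def[abs_def] L_def)
  also have "\<dots> = ennreal (2 powr (real_of_int n / p)) * es (\<lambda>s. s \<in> {0..1}) (\<lambda>s. f (x n + L * s))"
    by (rule es_scale) simp
  also have "es (\<lambda>s. s \<in> {0..1}) (\<lambda>s. f (x n + L * s)) = es (\<lambda>s. s \<in> {0..1}) (\<lambda>s. f0 (x n + L * s))"
  proof (rule es_cong, rule AE_I2, intro conjI impI refl)
    fix s :: real assume s: "s \<in> {0..1}"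
    then have "0 \<le> x n + L * s" using L x_pos[of n] by (auto intro!: add_nonneg_nonneg)
    then show "\<bar>f (x n + L * s)\<bar> = \<bar>f0 (x n + L * s)\<bar>" by (simp add: f0_def)
  qed
  also have "\<dots> = es (\<lambda>t. t \<in> {x n..x n + L}) f0"
    by (rule es_affine[OF L f0m])
  also have "\<dots> = A f n"
    unfolding A_def
  proof (rule es_cong, rule AE_I2, intro conjI impI)
    fix t
    show "(t \<in> {x n..x n + L}) = (t \<in> {x n..x (n + 1)})" by (simp add: L_def)
    assume "t \<in> {x n..x n + L}"
    then have "0 \<le> t" using x_pos[of n] by auto
    then show "\<bar>f0 t\<bar> = \<bar>f t\<bar>" by (simp add: f0_def)
  qed
  finally show ?thesis .
qed

lemma lp_T:
  assumes p: "p > 0" and f: "f \<in> borel_measurable (restrict_space lebesgue {0..})"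
  shows "lp_sum p (Top p f) = S p f"
  unfolding lp_sum_def S_def
proof (rule nn_integral_cong)
  fix n :: int
  have "(2 powr (real_of_int n / p)) powr p = 2 powr real_of_int n"
    using p by (simp add: powr_powr)
  then show "epow (Linf01_norm (Top p f n)) p = ennreal (2 powr real_of_int n) * epow (A f n) p"
    by (simp add: Linf_T[OF f] epow_scale)
qed

lemma bound1:
  assumes p: "p > 0" and f: "f \<in> borel_measurable (restrict_space lebesgue {0..})"
  shows "lp_sum p (Top p f) \<le> 2 * tilde_int p w f"
  using S_le[of p f] p by (simp add: lp_T[OF p f])

lemma bound2:
  assumes p: "p > 0" and f: "f \<in> borel_measurable (restrict_space lebesgue {0..})"
  shows "tilde_int p w f \<le> 2 * lp_sum p (Top p f)"
  using UB2[OF p, of f] by (simp add: lp_T[OF p f])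

definition idx :: "real \<Rightarrow> int" where
  "idx t = (THE n. x n \<le> t \<and> t < x (n+1))"

lemma idx_eq: assumes "x k \<le> t" "t < x (k+1)" shows "idx t = k"
  unfolding idx_def
proof (rule the_equality)
  show "x k \<le> t \<and> t < x (k + 1)" using assms by simp
  fix n assume "x n \<le> t \<and> t < x (n + 1)"
  then show "n = k" using idx_unique[of n t k] assms by simp
qed

definition finv :: "real \<Rightarrow> (int \<Rightarrow> real \<Rightarrow> real) \<Rightarrow> real \<Rightarrow> real" where
  "finv p y t = (if 0 < t then 2 powr (- (real_of_int (idx t) / p)) *
      y (idx t) ((t - x (idx t)) / (x (idx t + 1) - x (idx t))) else 0)"

lemma Top_finv:
  assumes s: "0 \<le> s" "s < 1"
  shows "Top p (finv p y) n s = y n s"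
proof -
  define L where "L = x (n+1) - x n"
  have L: "L > 0" using Lpos[of n] by (simp add: L_def)
  define t where "t = x n + L * s"
  have t1: "x n \<le> t" using L s by (simp add: t_def)
  have "L * s < L * 1" using L s by (intro mult_strict_left_mono) auto
  then have t2: "t < x (n+1)" by (simp add: t_def L_def)
  have t0: "0 < t" using t1 x_pos[of n] by linarith
  have it: "idx t = n" by (rule idx_eq[OF t1 t2])
  have ts: "(t - x n) / L = s" using L by (simp add: t_def)
  have "finv p y t = 2 powr (- (real_of_int n / p)) * y n s"
    using t0 ts by (simp add: finv_def it L_def)
  then have "Top p (finv p y) n s = 2 powr (real_of_int n / p) * (2 powr (- (real_of_int n / p)) * y n s)"
    by (simp add: Top_def t_def L_def)
  also have "\<dots> = (2 powr (real_of_int n / p) * 2 powr (- (real_of_int n / p))) * y n s" by simp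
  also have "2 powr (real_of_int n / p) * 2 powr (- (real_of_int n / p)) = 1"
    by (simp add: powr_add[symmetric])
  finally show ?thesis by simp
qed

lemma finv_piece0: "finv p y \<in> borel_measurable (restrict_space lebesgue {..0})"
proof -
  have e: "(\<lambda>t. indicator {..0} t *\<^sub>R finv p y t) = (\<lambda>_. 0::real)"
    by (auto simp: fun_eq_iff finv_def indicator_def)
  show ?thesis using borel_measurable_restrict_space_iff[of "{..0}" lebesgue "finv p y"] e by simp
qed

lemma aff_maps:
  assumes t: "t \<in> {x n..<x (n + 1)}"
  shows "- x n / (x (n+1) - x n) + 1 / (x (n+1) - x n) * t \<in> {0..1}"
proof -
  define L where "L = x (n+1) - x n"
  have L: "L > 0" using Lpos[of n] by (simp add: L_def)
  have e: "- x n / L + 1 / L * t = (t - x n) / L" using L by (simp add: field_simps)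
  have "0 \<le> (t - x n) / L" by (rule divide_nonneg_pos) (use t L in auto)
  moreover have "(t - x n) / L \<le> 1"
  proof -
    have "t - x n \<le> L" using t by (simp add: L_def)
    then show ?thesis using L by (simp add: pos_divide_le_eq)
  qed
  ultimately have "(t - x n) / L \<in> {0..1}" by (simp only: atLeastAtMost_iff)
  then show ?thesis unfolding L_def[symmetric] e .
qed

lemma aff_meas2:
  "(\<lambda>t. - x n / (x (n+1) - x n) + 1 / (x (n+1) - x n) * t)
     \<in> restrict_space lebesgue {x n..<x (n+1)} \<rightarrow>\<^sub>M restrict_space lebesgue {0..1}"
proof (rule measurable_restrict_space3)
  have "1 / (x (n+1) - x n) \<noteq> 0" using Lpos[of n] by simp
  then show "(\<lambda>t. - x n / (x (n+1) - x n) + 1 / (x (n+1) - x n) * t) \<in> lebesgue \<rightarrow>\<^sub>M lebesgue"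
    by (rule affine_meas)
  show "(\<lambda>t. - x n / (x (n+1) - x n) + 1 / (x (n+1) - x n) * t) \<in> {x n..<x (n+1)} \<rightarrow> {0..1}"
    using aff_maps by blast
qed

lemma finv_piece:
  assumes y: "y n \<in> borel_measurable (restrict_space lebesgue {0..1})"
  shows "finv p y \<in> borel_measurable (restrict_space lebesgue {x n..<x (n+1)})"
proof -
  let ?g = "\<lambda>t. - x n / (x (n+1) - x n) + 1 / (x (n+1) - x n) * t"
  from measurable_compose[OF aff_meas2 y]
  have "(\<lambda>t. y n (?g t)) \<in> borel_measurable (restrict_space lebesgue {x n..<x (n+1)})" .
  from borel_measurable_times[OF borel_measurable_const this]
  have m: "(\<lambda>t. 2 powr (- (real_of_int n / p)) * y n (?g t)) \<in> borel_measurable (restrict_space lebesgue {x n..<x (n+1)})" .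
  have eq: "finv p y t = 2 powr (- (real_of_int n / p)) * y n (?g t)"
    if t: "t \<in> space (restrict_space lebesgue {x n..<x (n+1)})" for t
  proof -
    have t1: "x n \<le> t" "t < x (n+1)" using t by (auto simp: space_restrict_space)
    have t0: "0 < t" using t1 x_pos[of n] by linarith
    have e: "?g t = (t - x n) / (x (n+1) - x n)" by (simp add: diff_divide_distrib)
    show ?thesis unfolding e using t0 by (simp add: finv_def idx_eq[OF t1])
  qed
  show ?thesis using m by (subst measurable_cong[OF eq]) 
qed

lemma finv_meas:
  assumes y: "\<And>n. y n \<in> borel_measurable (restrict_space lebesgue {0..1})"
  shows "finv p y \<in> borel_measurable lebesgue"
proof (rule measurable_piecewise_restrict[of "insert {..0} (range (\<lambda>n. {x n..<x (n+1)}))"])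
  show "countable (insert {..0} (range (\<lambda>n. {x n..<x (n+1)})))" by simp
  show "\<Omega> \<inter> space lebesgue \<in> sets lebesgue" if "\<Omega> \<in> insert {..0} (range (\<lambda>n. {x n..<x (n+1)}))" for \<Omega>
    using that by auto
  show "space lebesgue \<subseteq> \<Union> (insert {..0} (range (\<lambda>n. {x n..<x (n+1)})))"
  proof
    fix t :: real assume "t \<in> space lebesgue"
    show "t \<in> \<Union> (insert {..0} (range (\<lambda>n. {x n..<x (n+1)})))"
    proof (cases "t > 0")
      case True then obtain n where "x n \<le> t" "t < x (n+1)" using x_cover by blast
      then show ?thesis by auto
    qed auto
  qed
  fix \<Omega> assume "\<Omega> \<in> insert {..0} (range (\<lambda>n. {x n..<x (n+1)}))"
  then show "finv p y \<in> borel_measurable (restrict_space lebesgue \<Omega>)"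
    using finv_piece0 finv_piece[OF y] by auto
qed

lemma surj:
  assumes p: "p > 0" and y: "y \<in> lpLinf p"
  shows "finv p y \<in> tildeLp p w" and "lpLinf_norm p (\<lambda>n s. Top p (finv p y) n s - y n s) = 0"
proof -
  have ym: "\<And>n. y n \<in> borel_measurable (restrict_space lebesgue {0..1})" and yf: "lp_sum p y < \<infinity>"
    using y by (auto simp: lpLinf_def)
  have fm: "finv p y \<in> borel_measurable (restrict_space lebesgue {0..})"
    by (rule measurable_restrict_space1, rule finv_meas[OF ym])
  have eqn: "Linf01_norm (Top p (finv p y) n) = Linf01_norm (y n)" for n
    unfolding Linf_es
  proof (rule es_cong)
    show "AE t in lebesgue. (t \<in> {0..1} \<longleftrightarrow> t \<in> {0..1}) \<and> (t \<in> {0..1} \<longrightarrow> \<bar>Top p (finv p y) n t\<bar> = \<bar>y n t\<bar>)"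
      using AE_ne[of 1] by eventually_elim (auto simp: Top_finv)
  qed
  have "lp_sum p (Top p (finv p y)) = lp_sum p y"
    unfolding lp_sum_def by (simp add: eqn)
  then have "tilde_int p w (finv p y) \<le> 2 * lp_sum p y"
    using bound2[OF p fm] by simp
  also have "\<dots> < \<infinity>" using yf by (simp add: ennreal_mult_less_top)
  finally show "finv p y \<in> tildeLp p w" using fm by (simp add: tildeLp_def)
  have z: "Linf01_norm (\<lambda>s. Top p (finv p y) n s - y n s) = 0" for n
  proof -
    have "Linf01_norm (\<lambda>s. Top p (finv p y) n s - y n s) \<le> 0"
      unfolding Linf_es
    proof (rule es_least)
      show "AE t in lebesgue. t \<in> {0..1} \<longrightarrow> ennreal \<bar>Top p (finv p y) n t - y n t\<bar> \<le> 0"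
        using AE_ne[of 1] by eventually_elim (auto simp: Top_finv)
    qed
    then show ?thesis by simp
  qed
  show "lpLinf_norm p (\<lambda>n s. Top p (finv p y) n s - y n s) = 0"
    using p by (simp add: lpLinf_norm_def lp_sum_def z epow_zero)
qed

end


lemma construct_W:
  fixes w w' W :: "real \<Rightarrow> real"
  assumes w_meas: "w \<in> borel_measurable (restrict_space lebesgue {0..})"
    and w_locint: "\<And>a. a \<ge> 0 \<Longrightarrow> set_integrable lebesgue {0..a} w"
    and w_pos: "AE t in lebesgue. t \<ge> 0 \<longrightarrow> w t > 0"
    and w_infint: "(\<integral>\<^sup>+ t. ennreal (w t) * indicator {0..} t \<partial>lebesgue) = \<infinity>"
    and w'_def: "w' = (\<lambda>t. w t * indicator {0..} t)"
    and W_def: "W = (\<lambda>a. LINT t:{0..a}|lebesgue. w t)"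
  shows "(\<lambda>t. ennreal (w' t)) \<in> borel_measurable lebesgue"
    and "\<And>a. a \<ge> 0 \<Longrightarrow> (\<integral>\<^sup>+t. ennreal (w' t) * indicator {0..<a} t \<partial>lebesgue) = ennreal (W a)"
    and "\<And>a. a \<ge> 0 \<Longrightarrow> W a \<ge> 0"
    and "\<And>b. b \<ge> 0 \<Longrightarrow> continuous_on {0..b} W"
    and "\<And>a b. 0 \<le> a \<Longrightarrow> a < b \<Longrightarrow> W a < W b"
    and "W 0 = 0"
    and "\<And>B. \<exists>a\<ge>0. B < W a"
proof -
  have w'm0: "(\<lambda>t. indicator {0..} t *\<^sub>R w t) \<in> borel_measurable lebesgue"
    using borel_measurable_restrict_space_iff[of "{0..}" lebesgue w] w_meas by simp
  have w'm[measurable]: "w' \<in> borel_measurable lebesgue"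
    using w'm0 by (simp add: w'_def mult.commute)
  show wm[measurable]: "(\<lambda>t. ennreal (w' t)) \<in> borel_measurable lebesgue" by measurable
  have closed: "(\<integral>\<^sup>+t. ennreal (w' t) * indicator {0..a} t \<partial>lebesgue) = ennreal (W a)" if a: "a \<ge> 0" for a
  proof -
    have "(\<integral>\<^sup>+t. ennreal (w' t) * indicator {0..a} t \<partial>lebesgue)
        = (\<integral>\<^sup>+t. ennreal (indicator {0..a} t *\<^sub>R w t) \<partial>lebesgue)"
      by (intro nn_integral_cong) (auto simp: w'_def indicator_def)
    also have "\<dots> = ennreal (integral\<^sup>L lebesgue (\<lambda>t. indicator {0..a} t *\<^sub>R w t))"
    proof (rule nn_integral_eq_integral)
      show "integrable lebesgue (\<lambda>t. indicator {0..a} t *\<^sub>R w t)"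
        using w_locint[OF a] by (simp add: set_integrable_def)
      show "AE t in lebesgue. 0 \<le> indicator {0..a} t *\<^sub>R w t"
        using w_pos by eventually_elim (auto simp: indicator_def)
    qed
    also have "\<dots> = ennreal (W a)" by (simp add: W_def set_lebesgue_integral_def)
    finally show ?thesis .
  qed
  show ho: "(\<integral>\<^sup>+t. ennreal (w' t) * indicator {0..<a} t \<partial>lebesgue) = ennreal (W a)" if a: "a \<ge> 0" for a
  proof -
    have "(\<integral>\<^sup>+t. ennreal (w' t) * indicator {0..<a} t \<partial>lebesgue) = (\<integral>\<^sup>+t. ennreal (w' t) * indicator {0..a} t \<partial>lebesgue)"
      by (rule nn_integral_cong_AE) (use AE_ne[of a] in \<open>eventually_elim, auto simp: indicator_def\<close>)
    then show ?thesis using closed[OF a] by simp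
  qed
  show Wnn: "W a \<ge> 0" if a: "a \<ge> 0" for a
    unfolding W_def set_lebesgue_integral_def
    by (rule integral_nonneg_AE) (use w_pos in \<open>eventually_elim, auto simp: indicator_def\<close>)
  show "continuous_on {0..b} W" if b: "b \<ge> 0" for b
  proof -
    have wi: "w integrable_on {0..b}"
      using set_lebesgue_integral_eq_integral(1)[OF w_locint[OF b]] .
    have "continuous_on {0..b} (\<lambda>a. integral {0..a} w)"
      by (rule indefinite_integral_continuous_1[OF wi])
    then show ?thesis
    proof (rule continuous_on_eq)
      fix a assume "a \<in> {0..b}"
      then have "a \<ge> 0" by simp
      from set_lebesgue_integral_eq_integral(2)[OF w_locint[OF this]]
      show "integral {0..a} w = W a" by (simp add: W_def)
    qed
  qed
  show "W a < W b" if ab: "0 \<le> a" "a < b" for a b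
  proof -
    define X where "X = (\<integral>\<^sup>+t. ennreal (w' t) * indicator {a<..b} t \<partial>lebesgue)"
    have m1: "(\<lambda>t. ennreal (w' t) * indicator {0..a} t) \<in> borel_measurable lebesgue" by measurable
    have m2: "(\<lambda>t. ennreal (w' t) * indicator {a<..b} t) \<in> borel_measurable lebesgue" by measurable
    have "ennreal (W b) = (\<integral>\<^sup>+t. ennreal (w' t) * indicator {0..b} t \<partial>lebesgue)"
      using ab by (simp add: closed)
    also have "\<dots> = (\<integral>\<^sup>+t. ennreal (w' t) * indicator {0..a} t + ennreal (w' t) * indicator {a<..b} t \<partial>lebesgue)"
    proof (rule nn_integral_cong)
      fix t
      have "indicator {0..b} t = (indicator {0..a} t + indicator {a<..b} t :: ennreal)"
        using ab by (auto simp: indicator_def)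
      then show "ennreal (w' t) * indicator {0..b} t = ennreal (w' t) * indicator {0..a} t + ennreal (w' t) * indicator {a<..b} t"
        by (simp add: distrib_left)
    qed
    also have "\<dots> = ennreal (W a) + X"
      using ab by (simp add: nn_integral_add[OF m1 m2] closed X_def)
    finally have eqb: "ennreal (W b) = ennreal (W a) + X" .
    have "X \<noteq> 0"
    proof
      assume "X = 0"
      then have "AE t in lebesgue. ennreal (w' t) * indicator {a<..b} t = 0"
        using nn_integral_0_iff_AE[OF m2] unfolding X_def by simp
      then have "AE t in lebesgue. indicator {a<..b} t = (0::ennreal)"
        using w_pos by eventually_elim (use ab in \<open>auto simp: indicator_def w'_def\<close>)
      then have "(\<integral>\<^sup>+t. indicator {a<..b} t \<partial>lebesgue) = 0"
        using nn_integral_0_iff_AE[of "indicator {a<..b}" lebesgue] by simp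
      then have "emeasure lebesgue {a<..b} = 0" by simp
      then show False using ab by simp
    qed
    then have "ennreal (W a) < ennreal (W a) + X"
      using ennreal_add_left_cancel_less[of "ennreal (W a)" 0 X] by (simp add: zero_less_iff_neq_zero)
    then have "ennreal (W a) < ennreal (W b)" using eqb by simp
    then show ?thesis by (metis ennreal_leI not_le)
  qed
  show "W 0 = 0"
    unfolding W_def set_lebesgue_integral_def
    by (rule integral_eq_zero_AE) (use AE_ne[of 0] in \<open>eventually_elim, auto simp: indicator_def\<close>)
  show "\<exists>a\<ge>0. B < W a" for B
  proof (rule ccontr)
    assume "\<not> (\<exists>a\<ge>0. B < W a)"
    then have le: "\<And>a. a \<ge> 0 \<Longrightarrow> W a \<le> B" by auto
    define f where "f m t = ennreal (w' t) * indicator {0..real m} t" for m :: nat and t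
    have inc: "incseq f"
      unfolding incseq_def le_fun_def f_def
    proof (intro allI impI)
      fix m n :: nat and t :: real assume mn: "m \<le> n"
      have "indicator {0..real m} t \<le> (indicator {0..real n} t :: ennreal)"
        using mn by (auto simp: indicator_def)
      then show "ennreal (w' t) * indicator {0..real m} t \<le> ennreal (w' t) * indicator {0..real n} t"
        by (rule mult_left_mono) simp
    qed
    have fm: "\<And>m. f m \<in> borel_measurable lebesgue" unfolding f_def by measurable
    have sup: "(SUP m. f m t) = ennreal (w t) * indicator {0..} t" for t
    proof (cases "t \<ge> 0")
      case True
      show ?thesis
      proof (rule antisym)
        show "(SUP m. f m t) \<le> ennreal (w t) * indicator {0..} t"
          by (rule SUP_least) (auto simp: f_def indicator_def w'_def)
        have "ennreal (w t) * indicator {0..} t = f (nat \<lceil>t\<rceil>) t"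
          using True by (auto simp: f_def indicator_def w'_def real_nat_ceiling_ge)
        also have "\<dots> \<le> (SUP m. f m t)" by (rule SUP_upper) simp
        finally show "ennreal (w t) * indicator {0..} t \<le> (SUP m. f m t)" .
      qed
    next
      case False then show ?thesis by (simp add: f_def indicator_def)
    qed
    have "\<infinity> = (\<integral>\<^sup>+t. (SUP m. f m t) \<partial>lebesgue)" using w_infint by (simp add: sup)
    also have "\<dots> = (SUP m. integral\<^sup>N lebesgue (f m))"
      by (rule nn_integral_monotone_convergence_SUP[OF inc fm])
    also have "\<dots> \<le> ennreal B"
    proof (rule SUP_least)
      fix m :: nat
      have "integral\<^sup>N lebesgue (f m) = ennreal (W (real m))" unfolding f_def by (rule closed) simp
      also have "\<dots> \<le> ennreal B" using le[of "real m"] by (simp add: ennreal_leI)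
      finally show "integral\<^sup>N lebesgue (f m) \<le> ennreal B" .
    qed
    finally show False by (simp add: top_unique)
  qed
qed

lemma construct:
  fixes w :: "real \<Rightarrow> real"
  assumes w_meas: "w \<in> borel_measurable (restrict_space lebesgue {0..})"
    and w_locint: "\<And>a. a \<ge> 0 \<Longrightarrow> set_integrable lebesgue {0..a} w"
    and w_pos: "AE t in lebesgue. t \<ge> 0 \<longrightarrow> w t > 0"
    and w_infint: "(\<integral>\<^sup>+ t. ennreal (w t) * indicator {0..} t \<partial>lebesgue) = \<infinity>"
  shows "\<exists>x. dec (\<lambda>t. w t * indicator {0..} t) x"
proof -
  define w' :: "real \<Rightarrow> real" where "w' = (\<lambda>t. w t * indicator {0..} t)"
  define W :: "real \<Rightarrow> real" where "W = (\<lambda>a. LINT t:{0..a}|lebesgue. w t)"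
  note F = construct_W[OF w_meas w_locint w_pos w_infint w'_def W_def]
  have Wstrict: "\<And>a b. 0 \<le> a \<Longrightarrow> a < b \<Longrightarrow> W a < W b" by (rule F(5))
  have Wmono: "W a \<le> W b" if "0 \<le> a" "a \<le> b" for a b
    using Wstrict[of a b] that by (cases "a = b") auto
  have W0: "W 0 = 0" by (rule F(6))
  have ex: "\<exists>a. 0 \<le> a \<and> W a = 2 powr real_of_int n" for n
  proof -
    obtain b where b: "b \<ge> 0" "2 powr real_of_int n < W b" using F(7) by blast
    have "\<exists>a. 0 \<le> a \<and> a \<le> b \<and> W a = 2 powr real_of_int n"
    proof (rule IVT')
      show "continuous_on {0..b} W" by (rule F(4)) (use b in auto)
    qed (use b W0 in auto)
    then show ?thesis by blast
  qed
  have uniq: "a = a'" if "0 \<le> a" "0 \<le> a'" "W a = W a'" for a a'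
    using Wstrict[of a a'] Wstrict[of a' a] that by (cases a a' rule: linorder_cases) auto
  define x where "x n = (THE a. 0 \<le> a \<and> W a = 2 powr real_of_int n)" for n
  have xp: "0 \<le> x n \<and> W (x n) = 2 powr real_of_int n" for n
  proof -
    obtain a where a: "0 \<le> a" "W a = 2 powr real_of_int n" using ex by blast
    have "x n = a" unfolding x_def
      by (rule the_equality) (use a uniq in auto)
    then show ?thesis using a by simp
  qed
  have pow_lt: "2 powr real_of_int n < 2 powr real_of_int (n+1)" for n :: int
    by (rule powr_less_mono) auto
  show ?thesis
  proof (rule exI[of _ x], unfold_locales)
    fix n
    show "0 < x n"
    proof -
      have "W (x n) > 0" using xp[of n] by simp
      then have "x n \<noteq> 0" using W0 by auto
      then show ?thesis using xp[of n] by simp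
    qed
    show "x n < x (n+1)"
    proof (rule ccontr)
      assume "\<not> x n < x (n+1)"
      then have "W (x (n+1)) \<le> W (x n)" using xp by (intro Wmono) auto
      then show False using xp[of n] xp[of "n+1"] pow_lt[of n] by simp
    qed
    show "(\<integral>\<^sup>+t. ennreal (w t * indicator {0..} t) * indicator {x n..<x (n+1)} t \<partial>lebesgue) = ennreal (2 powr real_of_int n)"
    proof -
      define a where "a = x n"
      define b where "b = x (n+1)"
      have a0: "0 \<le> a" using xp[of n] by (simp add: a_def)
      have ab: "a \<le> b"
      proof (rule ccontr)
        assume "\<not> a \<le> b"
        then have "W b \<le> W a" using xp by (intro Wmono) (auto simp: a_def b_def)
        then show False using xp[of n] xp[of "n+1"] pow_lt[of n] by (simp add: a_def b_def)
      qed
      have m1: "(\<lambda>t. ennreal (w' t) * indicator {0..<a} t) \<in> borel_measurable lebesgue"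
        using F(1) by measurable
      have m2: "(\<lambda>t. ennreal (w' t) * indicator {a..<b} t) \<in> borel_measurable lebesgue"
        using F(1) by measurable
      define X where "X = (\<integral>\<^sup>+t. ennreal (w' t) * indicator {a..<b} t \<partial>lebesgue)"
      have "ennreal (W b) = (\<integral>\<^sup>+t. ennreal (w' t) * indicator {0..<b} t \<partial>lebesgue)"
        using a0 ab by (simp add: F(2))
      also have "\<dots> = (\<integral>\<^sup>+t. ennreal (w' t) * indicator {0..<a} t + ennreal (w' t) * indicator {a..<b} t \<partial>lebesgue)"
      proof (rule nn_integral_cong)
        fix t
        have "indicator {0..<b} t = (indicator {0..<a} t + indicator {a..<b} t :: ennreal)"
          using a0 ab by (auto simp: indicator_def)
        then show "ennreal (w' t) * indicator {0..<b} t = ennreal (w' t) * indicator {0..<a} t + ennreal (w' t) * indicator {a..<b} t"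
          by (simp add: distrib_left)
      qed
      also have "\<dots> = ennreal (W a) + X"
        using a0 by (simp add: nn_integral_add[OF m1 m2] F(2) X_def)
      finally have e1: "ennreal (W b) = ennreal (W a) + X" .
      have Wa: "W a = 2 powr real_of_int n" and Wb: "W b = 2 powr real_of_int (n+1)"
        using xp[of n] xp[of "n+1"] by (simp_all add: a_def b_def)
      have "ennreal (W b) = ennreal (W a) + ennreal (W b - W a)"
        using pow_lt[of n] Wa Wb by (subst ennreal_plus[symmetric]) auto
      with e1 have "X = ennreal (W b - W a)"
        by (simp add: ennreal_add_left_cancel)
      also have "W b - W a = 2 powr real_of_int n"
        using Wa Wb by (simp add: powr_add)
      finally have "X = ennreal (2 powr real_of_int n)" .
      moreover have "(\<integral>\<^sup>+t. ennreal (w t * indicator {0..} t) * indicator {x n..<x (n+1)} t \<partial>lebesgue) = X"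
        by (simp add: X_def w'_def a_def b_def)
      ultimately show ?thesis by simp
    qed
  next
    fix t :: real assume t: "0 < t"
    have Wt: "0 < W t" using Wstrict[of 0 t] t W0 by simp
    define k where "k = \<lfloor>log 2 (W t)\<rfloor>"
    have "2 powr real_of_int k \<le> 2 powr (log 2 (W t))"
      unfolding k_def by (rule powr_mono) auto
    then have k1: "2 powr real_of_int k \<le> W t" using Wt by simp
    have "log 2 (W t) < real_of_int k + 1" unfolding k_def by linarith
    then have "2 powr (log 2 (W t)) < 2 powr (real_of_int k + 1)"
      by (rule powr_less_mono) simp
    then have k2: "W t < 2 powr real_of_int (k+1)" using Wt by simp
    have "x k \<le> t"
    proof (rule ccontr)
      assume "\<not> x k \<le> t"
      then have "W t < W (x k)" using t by (intro Wstrict) auto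
      then show False using xp[of k] k1 by simp
    qed
    moreover have "t < x (k+1)"
    proof (rule ccontr)
      assume "\<not> t < x (k+1)"
      then have "W (x (k+1)) \<le> W t" using xp by (intro Wmono) auto
      then show False using xp[of "k+1"] k2 by simp
    qed
    ultimately show "\<exists>n. x n \<le> t \<and> t < x (n+1)" by blast
  next
    show "(\<lambda>t. ennreal (w t * indicator {0..} t)) \<in> borel_measurable lebesgue"
      using F(1) by (simp add: w'_def)
  qed
qed

lemma norm_le:
  assumes p: "p > 0" and ab: "a \<le> 2 * b" and b: "b < \<infinity>"
  shows "enn2real a powr (1/p) \<le> 2 powr (1/p) * enn2real b powr (1/p)"
proof -
  have "2 * b < \<infinity>" using b by (simp add: ennreal_mult_less_top)
  then have "enn2real a \<le> enn2real (2 * b)" by (intro enn2real_mono ab) simp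
  also have "enn2real (2 * b) = 2 * enn2real b" by (simp add: enn2real_mult)
  finally have "enn2real a powr (1/p) \<le> (2 * enn2real b) powr (1/p)"
    using p by (intro powr_mono2) auto
  also have "\<dots> = 2 powr (1/p) * enn2real b powr (1/p)" by (simp add: powr_mult)
  finally show ?thesis .
qed

lemma ti_eq: "tilde_int p (\<lambda>t. w t * indicator {0..} t) f = tilde_int p w f"
  unfolding tilde_int_def by (intro nn_integral_cong) (auto simp: indicator_def)

lemma tL_eq: "tildeLp p (\<lambda>t. w t * indicator {0..} t) = tildeLp p w"
  unfolding tildeLp_def by (simp add: ti_eq)

theorem proposition2:
  fixes w :: "real \<Rightarrow> real"
  assumes w_meas: "w \<in> borel_measurable (restrict_space lebesgue {0..})"
    and w_locint: "\<And>a. a \<ge> 0 \<Longrightarrow> set_integrable lebesgue {0..a} w"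
    and w_pos: "AE t in lebesgue. t \<ge> 0 \<longrightarrow> w t > 0"
    and w_infint: "(\<integral>\<^sup>+ t. ennreal (w t) * indicator {0..} t \<partial>lebesgue) = \<infinity>"
  shows "\<exists>C::real. C > 0 \<and>
    (\<forall>p::real. 1 \<le> p \<longrightarrow>
      (\<exists>(T :: (real \<Rightarrow> real) \<Rightarrow> (int \<Rightarrow> real \<Rightarrow> real)) C1 C2.
         C1 > 0 \<and> C2 > 0 \<and> C1 * C2 \<le> C \<and>
         (\<forall>f \<in> tildeLp p w. T f \<in> lpLinf p) \<and>
         (\<forall>f \<in> tildeLp p w. \<forall>g \<in> tildeLp p w. \<forall>a b::real.
             T (\<lambda>t. a * f t + b * g t) = (\<lambda>n s. a * T f n s + b * T g n s)) \<and>
         (\<forall>f \<in> tildeLp p w. lpLinf_norm p (T f) \<le> C1 * tildeLp_norm p w f) \<and>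
         (\<forall>f \<in> tildeLp p w. tildeLp_norm p w f \<le> C2 * lpLinf_norm p (T f)) \<and>
         (\<forall>y \<in> lpLinf p. \<exists>f \<in> tildeLp p w.
             lpLinf_norm p (\<lambda>n s. T f n s - y n s) = 0)))"
proof -
  obtain x where D: "dec (\<lambda>t. w t * indicator {0..} t) x"
    using construct[OF w_meas w_locint w_pos w_infint] by blast
  interpret D: dec "\<lambda>t. w t * indicator {0..} t" x by (rule D)
  have main: "\<exists>(T :: (real \<Rightarrow> real) \<Rightarrow> (int \<Rightarrow> real \<Rightarrow> real)) C1 C2.
         C1 > 0 \<and> C2 > 0 \<and> C1 * C2 \<le> 4 \<and>
         (\<forall>f \<in> tildeLp p w. T f \<in> lpLinf p) \<and>
         (\<forall>f \<in> tildeLp p w. \<forall>g \<in> tildeLp p w. \<forall>a b::real.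
             T (\<lambda>t. a * f t + b * g t) = (\<lambda>n s. a * T f n s + b * T g n s)) \<and>
         (\<forall>f \<in> tildeLp p w. lpLinf_norm p (T f) \<le> C1 * tildeLp_norm p w f) \<and>
         (\<forall>f \<in> tildeLp p w. tildeLp_norm p w f \<le> C2 * lpLinf_norm p (T f)) \<and>
         (\<forall>y \<in> lpLinf p. \<exists>f \<in> tildeLp p w.
             lpLinf_norm p (\<lambda>n s. T f n s - y n s) = 0)" if p1: "1 \<le> p" for p
  proof -
    have p: "p > 0" using p1 by simp
    define C where "C = (2::real) powr (1/p)"
    have C0: "C > 0" by (simp add: C_def)
    have CC: "C * C \<le> 4"
    proof -
      have "C * C = 2 powr (2/p)" by (simp add: C_def powr_add[symmetric])
      also have "\<dots> \<le> 2 powr 2" using p1 p by (intro powr_mono) (auto simp: divide_le_eq)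
      also have "\<dots> = 4" by simp
      finally show ?thesis .
    qed
    have fin: "lp_sum p (D.Top p f) < \<infinity>" and fm: "f \<in> borel_measurable (restrict_space lebesgue {0..})"
      and tf: "tilde_int p w f < \<infinity>" if f: "f \<in> tildeLp p w" for f
    proof -
      show fm: "f \<in> borel_measurable (restrict_space lebesgue {0..})" and tf: "tilde_int p w f < \<infinity>"
        using f by (auto simp: tildeLp_def)
      have "lp_sum p (D.Top p f) \<le> 2 * tilde_int p w f"
        using D.bound1[OF p fm] by (simp add: ti_eq)
      also have "\<dots> < \<infinity>" using tf by (simp add: ennreal_mult_less_top)
      finally show "lp_sum p (D.Top p f) < \<infinity>" .
    qed
    have h4: "\<forall>f \<in> tildeLp p w. D.Top p f \<in> lpLinf p"
      using fin fm D.Top_meas by (auto simp: lpLinf_def)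
    have h5: "\<forall>f \<in> tildeLp p w. \<forall>g \<in> tildeLp p w. \<forall>a b::real.
             D.Top p (\<lambda>t. a * f t + b * g t) = (\<lambda>n s. a * D.Top p f n s + b * D.Top p g n s)"
      by (simp add: D.Top_def fun_eq_iff algebra_simps)
    have h6: "\<forall>f \<in> tildeLp p w. lpLinf_norm p (D.Top p f) \<le> C * tildeLp_norm p w f"
    proof
      fix f assume f: "f \<in> tildeLp p w"
      have "lp_sum p (D.Top p f) \<le> 2 * tilde_int p w f"
        using D.bound1[OF p fm[OF f]] by (simp add: ti_eq)
      then show "lpLinf_norm p (D.Top p f) \<le> C * tildeLp_norm p w f"
        unfolding lpLinf_norm_def tildeLp_norm_def C_def by (rule norm_le[OF p _ tf[OF f]])
    qed
    have h7: "\<forall>f \<in> tildeLp p w. tildeLp_norm p w f \<le> C * lpLinf_norm p (D.Top p f)"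
    proof
      fix f assume f: "f \<in> tildeLp p w"
      have "tilde_int p w f \<le> 2 * lp_sum p (D.Top p f)"
        using D.bound2[OF p fm[OF f]] by (simp add: ti_eq)
      then show "tildeLp_norm p w f \<le> C * lpLinf_norm p (D.Top p f)"
        unfolding lpLinf_norm_def tildeLp_norm_def C_def by (rule norm_le[OF p _ fin[OF f]])
    qed
    have h8: "\<forall>y \<in> lpLinf p. \<exists>f \<in> tildeLp p w. lpLinf_norm p (\<lambda>n s. D.Top p f n s - y n s) = 0"
    proof
      fix y assume y: "y \<in> lpLinf p"
      show "\<exists>f \<in> tildeLp p w. lpLinf_norm p (\<lambda>n s. D.Top p f n s - y n s) = 0"
        using D.surj[OF p y] by (auto simp: tL_eq)
    qed
    show ?thesis
      by (rule exI[of _ "D.Top p"], rule exI[of _ C], rule exI[of _ C]) (use C0 CC h4 h5 h6 h7 h8 in blast)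
  qed
  show ?thesis by (rule exI[of _ 4]) (use main in auto)
qed

end
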